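(* If $f(z)=\sum_{k=1}^\infty b_k z^k$ is analytic in $\mathbb{D}$ with $\|f\|_{\mathcal{B}}\le 1$, then $$ \sum_{k=1}^n k|b_k|^2\le \frac{n^n}{(n-1)^{n-1}} \quad\text{for all } n\ge 2. $$ Moreover, $$ \frac{32}{27}\, nB_n^2\le \frac{n^n}{(n-1)^{n-1}}\le \frac{4}{e}\, nB_n^2 \quad\text{for all } n\ge 2. $$
   Context: $\mathbb{D}$ is the open unit disc. The Bloch space $\mathcal{B}$ consists of analytic functions $f$ on $\mathbb{D}$ with finite norm $\|f\|_{\mathcal{B}}=|f(0)|+\sup_{z\in\mathbb{D}}(1-|z|^2)|f'(z)|$. For $n\ge 2$, $B_n=\frac{n+1}{2n}\left(\frac{n+1}{n-1}\right)^{(n-1)/2}$. *)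

theory Defs
  imports "HOL-Complex_Analysis.Complex_Analysis"
begin

definition bloch_space :: "(complex \<Rightarrow> complex) set" where
  "bloch_space = {f. f holomorphic_on ball 0 1 \<and>
     bdd_above ((\<lambda>z. (1 - (cmod z)^2) * cmod (deriv f z)) ` ball 0 1)}"

definition bloch_norm :: "(complex \<Rightarrow> complex) \<Rightarrow> real" where
  "bloch_norm f = cmod (f 0) + (SUP z\<in>ball 0 1. (1 - (cmod z)^2) * cmod (deriv f z))"

definition B_const :: "nat \<Rightarrow> real" where
  "B_const n = (real n + 1) / (2 * real n) * ((real n + 1) / (real n - 1)) powr ((real n - 1) / 2)"

end

theory Submission
  imports Defs
begin

lemma orth:
  assumes "j < m" "k < m"
  shows "(\<Sum>s<m. cis (2*pi*real (s*j)/m) * cnj (cis (2*pi*real (s*k)/m))) = (if j = k then of_nat m else 0)"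
proof -
  define w where "w = cis (2*pi*(real j - real k)/m)"
  have e: "cis (2*pi*real (s*j)/m) * cnj (cis (2*pi*real (s*k)/m)) = w ^ s" for s
  proof -
    have "w ^ s = cis (real s * (2*pi*(real j - real k)/m))" unfolding w_def by (rule Complex.DeMoivre)
    also have "\<dots> = cis (2*pi*real (s*j)/m + - (2*pi*real (s*k)/m))"
      by (rule arg_cong[where f=cis]) (simp add: algebra_simps diff_divide_distrib)
    also have "\<dots> = cis (2*pi*real (s*j)/m) * cnj (cis (2*pi*real (s*k)/m))"
      by (simp only: cis_mult[symmetric] cis_cnj)
    finally show ?thesis by simp
  qed
  show ?thesis
  proof (cases "j = k")
    case True
    show ?thesis unfolding e using True by (simp add: w_def)
  next
    case False
    have m: "m > 0" using assms by simp
    have wm: "w ^ m = 1"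
    proof -
      have "w ^ m = cis (2*pi*(real j - real k))" using m by (simp add: w_def Complex.DeMoivre)
      also have "\<dots> = cis (2*pi*real j) / cis (2*pi*real k)"
        by (simp add: cis_divide algebra_simps)
      also have "cis (2*pi*real j) = 1"
        using cos_integer_2pi[of "real j"] sin_integer_2pi[of "real j"] by (simp add: complex_eq_iff)
      also have "cis (2*pi*real k) = 1"
        using cos_integer_2pi[of "real k"] sin_integer_2pi[of "real k"] by (simp add: complex_eq_iff)
      finally show ?thesis by simp
    qed
    have w1: "w \<noteq> 1"
    proof
      assume "w = 1"
      then have "cos (2*pi*(real j - real k)/m) = 1" by (simp add: w_def complex_eq_iff)
      then obtain n :: int where n: "2*pi*(real j - real k)/m = real_of_int n * 2 * pi"
        by (subst (asm) cos_one_2pi_int) blast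
      hence "(2*pi)*(real j - real k) = (2*pi)*(real_of_int n * real m)"
        using m by (simp add: field_simps)
      hence "real j - real k = real_of_int n * real m"
        by (subst (asm) mult_left_cancel) auto
      hence "real_of_int (int j - int k) = real_of_int (n * int m)"
        by simp
      hence *: "int j - int k = n * int m" by (simp only: of_int_eq_iff)
      hence "\<bar>n\<bar> * int m = \<bar>int j - int k\<bar>" by (simp add: abs_mult)
      also have "\<dots> < int m" using assms by linarith
      finally have "\<bar>n\<bar> * int m < 1 * int m" by simp
      hence "\<bar>n\<bar> < 1" using m by (subst (asm) mult_less_cancel_right) auto
      hence "n = 0" by simp
      with * False show False by simp
    qed
    have "(\<Sum>s<m. w ^ s) = 0"
      using w1 wm by (simp add: geometric_sum)
    then show ?thesis unfolding e using False by simp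
  qed
qed

lemma dparseval:
  fixes a :: "nat \<Rightarrow> complex" assumes "m > 0"
  shows "(\<Sum>s<m. (cmod (\<Sum>j<m. a j * cis (2*pi*real (s*j)/m)))^2) = real m * (\<Sum>j<m. (cmod (a j))^2)"
proof -
  define e where "e = (\<lambda>s j. cis (2*pi*real (s*j)/m))"
  have "complex_of_real (\<Sum>s<m. (cmod (\<Sum>j<m. a j * e s j))^2)
      = (\<Sum>s<m. (\<Sum>j<m. a j * e s j) * cnj (\<Sum>k<m. a k * e s k))"
    by (simp only: of_real_sum complex_norm_square)
  also have "\<dots> = (\<Sum>s<m. \<Sum>j<m. \<Sum>k<m. a j * cnj (a k) * (e s j * cnj (e s k)))"
    by (simp only: cnj_sum sum_product complex_cnj_mult) (simp add: mult_ac)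
  also have "\<dots> = (\<Sum>j<m. \<Sum>k<m. a j * cnj (a k) * (\<Sum>s<m. e s j * cnj (e s k)))"
  proof -
    have "(\<Sum>s<m. \<Sum>j<m. \<Sum>k<m. a j * cnj (a k) * (e s j * cnj (e s k)))
       = (\<Sum>j<m. \<Sum>s<m. \<Sum>k<m. a j * cnj (a k) * (e s j * cnj (e s k)))"
      by (rule sum.swap)
    also have "\<dots> = (\<Sum>j<m. \<Sum>k<m. \<Sum>s<m. a j * cnj (a k) * (e s j * cnj (e s k)))"
      by (rule sum.cong[OF refl], rule sum.swap)
    finally show ?thesis by (simp add: sum_distrib_left)
  qed
  also have "\<dots> = (\<Sum>j<m. \<Sum>k<m. a j * cnj (a k) * (if j = k then of_nat m else 0))"
    unfolding e_def by (intro sum.cong refl arg_cong2[where f="(*)"], subst orth, auto)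
  also have "\<dots> = (\<Sum>j<m. of_nat m * (a j * cnj (a j)))"
    by (simp add: if_distrib mult_ac cong: if_cong)
  also have "\<dots> = complex_of_real (real m * (\<Sum>j<m. (cmod (a j))^2))"
    by (simp add: sum_distrib_left complex_norm_square[symmetric])
  finally show ?thesis unfolding e_def by (simp only: of_real_eq_iff)
qed

lemma gutzmer:
  fixes c :: "nat \<Rightarrow> complex" and r M :: real
  assumes r: "r \<ge> 0" and sm: "summable (\<lambda>j. cmod (c j) * r^j)"
    and bd: "\<And>z. cmod z = r \<Longrightarrow> cmod (\<Sum>j. c j * z^j) \<le> M"
  shows "(\<Sum>j<N. (cmod (c j))^2 * r^(2*j)) \<le> M^2"
proof -
  define S where "S m = (\<Sum>j<m. (cmod (c j))^2 * r^(2*j))" for m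
  define T where "T = (\<Sum>j. cmod (c j) * r^j)"
  define eps where "eps m = T - (\<Sum>j<m. cmod (c j) * r^j)" for m
  have M0: "M \<ge> 0" using bd[of "of_real r"] r by (auto intro: order_trans[OF norm_ge_zero])
  have eps0: "eps \<longlonglongrightarrow> 0"
  proof -
    have "(\<lambda>m. T - (\<Sum>j<m. cmod (c j) * r^j)) \<longlonglongrightarrow> T - T"
      unfolding T_def by (intro tendsto_diff tendsto_const summable_LIMSEQ sm)
    moreover have "eps = (\<lambda>m. T - (\<Sum>j<m. cmod (c j) * r^j))" by (rule ext) (simp add: eps_def)
    ultimately show ?thesis by simp
  qed
  have eps_eq: "eps m = (\<Sum>j. cmod (c (j + m)) * r^(j + m))" for m
    using suminf_split_initial_segment[OF sm, of m] by (simp add: eps_def T_def)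
  have eps_nonneg: "eps m \<ge> 0" for m
    unfolding eps_eq using r by (intro suminf_nonneg summable_ignore_initial_segment[OF sm]) auto
  have key: "S m \<le> (M + eps m)^2" if m: "m > 0" for m
  proof -
    define z where "z s = complex_of_real r * cis (2*pi*real s/m)" for s
    have nz: "cmod (z s) = r" for s using r by (simp add: z_def norm_mult)
    have P: "(\<Sum>j<m. c j * z s ^ j) = (\<Sum>j<m. (c j * of_real r^j) * cis (2*pi*real (s*j)/m))" for s
    proof (intro sum.cong refl)
      fix j
      have "cis (2*pi*real s/m) ^ j = cis (2*pi*real (s*j)/m)"
        by (simp add: Complex.DeMoivre algebra_simps)
      then show "c j * z s ^ j = (c j * of_real r^j) * cis (2*pi*real (s*j)/m)"
        by (simp add: z_def power_mult_distrib)
    qed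
    have bound: "cmod (\<Sum>j<m. c j * z s ^ j) \<le> M + eps m" for s
    proof -
      have nrm: "norm (c j * z s ^ j) = cmod (c j) * r^j" for j
        by (simp add: norm_mult norm_power nz)
      have smz: "summable (\<lambda>j. c j * z s ^ j)"
        by (rule summable_norm_cancel) (simp add: nrm sm)
      have smt: "summable (\<lambda>j. norm (c (j + m) * z s ^ (j + m)))"
        unfolding nrm by (rule summable_ignore_initial_segment[OF sm])
      have split: "(\<Sum>j<m. c j * z s ^ j) = (\<Sum>j. c j * z s ^ j) - (\<Sum>j. c (j + m) * z s ^ (j + m))"
        using suminf_split_initial_segment[OF smz, of m] by simp
      have "cmod (\<Sum>j. c (j + m) * z s ^ (j + m)) \<le> (\<Sum>j. norm (c (j + m) * z s ^ (j + m)))"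
        by (rule summable_norm[OF smt])
      also have "\<dots> = eps m" unfolding eps_eq nrm by simp
      finally have t: "cmod (\<Sum>j. c (j + m) * z s ^ (j + m)) \<le> eps m" .
      have "cmod (\<Sum>j<m. c j * z s ^ j) \<le> cmod (\<Sum>j. c j * z s ^ j) + cmod (\<Sum>j. c (j + m) * z s ^ (j + m))"
        unfolding split by (rule norm_triangle_ineq4)
      also have "\<dots> \<le> M + eps m" using bd[OF nz[of s]] t by simp
      finally show ?thesis .
    qed
    have "real m * S m = (\<Sum>s<m. (cmod (\<Sum>j<m. c j * z s ^ j))^2)"
      unfolding P dparseval[OF m] S_def
      by (simp add: norm_mult norm_power power_mult_distrib power_mult abs_of_nonneg r mult_ac)
    also have "\<dots> \<le> (\<Sum>s<m. (M + eps m)^2)"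
      by (intro sum_mono power_mono bound) simp
    also have "\<dots> = real m * (M + eps m)^2" by simp
    finally show ?thesis using m by simp
  qed
  have "S N \<le> (M + eps m)^2" if "m \<ge> max N 1" for m
  proof -
    have "S N \<le> S m" unfolding S_def using that
      by (intro sum_mono2) auto
    also have "\<dots> \<le> (M + eps m)^2" using key[of m] that by simp
    finally show ?thesis .
  qed
  moreover have "(\<lambda>m. (M + eps m)^2) \<longlonglongrightarrow> (M + 0)^2"
    by (intro tendsto_intros eps0)
  ultimately have "S N \<le> (M + 0)^2"
    by (intro LIMSEQ_le_const[of "\<lambda>m. (M + eps m)^2"]) (auto intro!: exI[of _ "max N 1"])
  then show ?thesis by (simp add: S_def)
qed

lemma deriv_series:
  fixes b :: "nat \<Rightarrow> complex"
  assumes sums: "\<And>z. z \<in> ball 0 1 \<Longrightarrow> (\<lambda>k. b k * z ^ k) sums f z" and z: "cmod z < 1"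
  shows "deriv f z = (\<Sum>n. diffs b n * z^n)"
proof -
  have sm: "summable (\<lambda>n. b n * w ^ n)" if "norm w < 1" for w
    using sums[of w] that by (auto dest: sums_summable)
  have "((\<lambda>z. \<Sum>n. b n * z^n) has_field_derivative (\<Sum>n. diffs b n * z^n)) (at z)"
    by (rule termdiffs_strong'[of 1]) (use sm z in auto)
  then have "(f has_field_derivative (\<Sum>n. diffs b n * z^n)) (at z)"
    by (rule has_field_derivative_transform_within_open[of _ _ _ "ball 0 1"])
       (use z sums in \<open>auto simp: sums_iff\<close>)
  then show ?thesis by (rule DERIV_imp_deriv)
qed

lemma coeff_bound:
  fixes b :: "nat \<Rightarrow> complex"
  assumes sums: "\<And>z. z \<in> ball 0 1 \<Longrightarrow> (\<lambda>k. b k * z ^ k) sums f z"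
    and bl: "\<And>z. z \<in> ball 0 1 \<Longrightarrow> (1 - (cmod z)^2) * cmod (deriv f z) \<le> 1"
    and x: "0 \<le> x" "x < 1"
  shows "(\<Sum>j<N. (cmod (diffs b j))^2 * x^j) \<le> (1 / (1 - x))^2"
proof -
  define r where "r = sqrt x"
  have r: "0 \<le> r" "r < 1" "r^2 = x" using x by (auto simp: r_def)
  have sm: "summable (\<lambda>n. b n * w ^ n)" if "norm w < 1" for w
    using sums[of w] that by (auto dest: sums_summable)
  have smd: "summable (\<lambda>n. diffs b n * w ^ n)" if "norm w < 1" for w
    by (rule termdiff_converges[of w 1]) (use sm that in auto)
  have n1: "cmod (complex_of_real ((1+r)/2)) = (1+r)/2" using r by (simp only: norm_of_real) simp
  have "summable (\<lambda>n. norm (diffs b n * (of_real r) ^ n))"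
    by (rule powser_insidea[OF smd[of "of_real ((1 + r)/2)"]]) (use r n1 in auto)
  then have sma: "summable (\<lambda>j. cmod (diffs b j) * r^j)"
    using r by (simp add: norm_mult norm_power)
  have bd: "cmod (\<Sum>j. diffs b j * z^j) \<le> 1 / (1 - x)" if "cmod z = r" for z
  proof -
    have "(1 - r^2) * cmod (deriv f z) \<le> 1" using bl[of z] that r by auto
    moreover have "1 - r^2 > 0" using x r(3) by simp
    ultimately have "cmod (deriv f z) \<le> 1 / (1 - r^2)" by (simp add: field_simps)
    then show ?thesis using deriv_series[OF sums, of z] that r by simp
  qed
  have "(\<Sum>j<N. (cmod (diffs b j))^2 * r^(2*j)) \<le> (1 / (1 - x))^2"
    by (rule gutzmer[OF r(1) sma bd])
  then show ?thesis using r by (simp add: power_mult)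
qed

lemma integ:
  fixes a :: "nat \<Rightarrow> real"
  assumes h: "\<And>x. 0 \<le> x \<Longrightarrow> x < 1 \<Longrightarrow> (\<Sum>j<n. (real (Suc j))^2 * a (Suc j) * x^j) \<le> (1/(1-x))^2"
    and t: "0 \<le> t" "t < 1"
  shows "(\<Sum>j<n. real (Suc j) * a (Suc j) * t^(Suc j)) \<le> t/(1-t)"
proof -
  define H where "H x = x/(1-x) - (\<Sum>j<n. real (Suc j) * a (Suc j) * x^(Suc j))" for x
  have "H 0 \<le> H t"
  proof (rule DERIV_nonneg_imp_nondecreasing[OF t(1)])
    fix x assume x: "0 \<le> x" "x \<le> t"
    then have x1: "x < 1" using t by simp
    have "(H has_real_derivative (1/(1-x)^2 - (\<Sum>j<n. (real (Suc j))^2 * a (Suc j) * x^j))) (at x)"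
    proof -
      have "(H has_real_derivative ((1 * (1 - x) - x * (0 - 1)) / (1-x)^2 - (\<Sum>j<n. real (Suc j) * a (Suc j) * (real (Suc j) * x^j)))) (at x)"
      proof -
        have aux: "x^j + real j * x^(j - Suc 0) * x = (1 + real j) * x^j" for j
          by (cases j) (auto simp: algebra_simps)
        show ?thesis
        unfolding H_def using x1
        by (auto intro!: derivative_eq_intros sum.cong simp: power2_eq_square aux)
      qed
      moreover have "(1 * (1 - x) - x * (0 - 1)) / (1-x)^2 = 1/(1-x)^2" by simp
      moreover have "(\<Sum>j<n. real (Suc j) * a (Suc j) * (real (Suc j) * x^j)) = (\<Sum>j<n. (real (Suc j))^2 * a (Suc j) * x^j)"
        by (simp add: power2_eq_square mult_ac)
      ultimately show ?thesis by simp
    qed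
    moreover have "1/(1-x)^2 - (\<Sum>j<n. (real (Suc j))^2 * a (Suc j) * x^j) \<ge> 0"
      using h[OF x(1) x1] by (simp add: power_divide)
    ultimately show "\<exists>y. (H has_real_derivative y) (at x) \<and> 0 \<le> y" by blast
  qed
  then show ?thesis by (simp add: H_def)
qed

lemma part1:
  fixes b :: "nat \<Rightarrow> complex"
  assumes sums: "\<And>z. z \<in> ball 0 1 \<Longrightarrow> (\<lambda>k. b k * z ^ k) sums f z"
    and bl: "\<And>z. z \<in> ball 0 1 \<Longrightarrow> (1 - (cmod z)^2) * cmod (deriv f z) \<le> 1"
    and n: "n \<ge> 2"
  shows "(\<Sum>k=1..n. real k * (cmod (b k))^2) \<le> real n ^ n / (real n - 1) ^ (n - 1)"
proof -
  define a where "a k = (cmod (b k))^2" for k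
  have h: "(\<Sum>j<n. (real (Suc j))^2 * a (Suc j) * x^j) \<le> (1/(1-x))^2" if "0 \<le> x" "x < 1" for x
  proof -
    have "(\<Sum>j<n. (cmod (diffs b j))^2 * x^j) \<le> (1 / (1 - x))^2"
      by (rule coeff_bound[OF sums bl that])
    moreover have "(cmod (diffs b j))^2 = (real (Suc j))^2 * a (Suc j)" for j
      by (simp only: diffs_def a_def norm_mult power_mult_distrib norm_of_nat)
    ultimately show ?thesis by simp
  qed
  define t where "t = (real n - 1) / real n"
  have t: "0 \<le> t" "t < 1" "0 < t" using n by (auto simp: t_def)
  have I: "(\<Sum>j<n. real (Suc j) * a (Suc j) * t^(Suc j)) \<le> t/(1-t)"
    by (rule integ[OF h t(1) t(2)])
  have "t^n * (\<Sum>j<n. real (Suc j) * a (Suc j)) \<le> (\<Sum>j<n. real (Suc j) * a (Suc j) * t^(Suc j))"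
    unfolding sum_distrib_left
  proof (rule sum_mono)
    fix j assume "j \<in> {..<n}"
    then have "t^n \<le> t^(Suc j)" using t by (intro power_decreasing) auto
    moreover have "real (Suc j) * a (Suc j) \<ge> 0" by (simp add: a_def)
    ultimately show "t^n * (real (Suc j) * a (Suc j)) \<le> real (Suc j) * a (Suc j) * t^(Suc j)"
      by (simp add: mult_right_mono mult.commute)
  qed
  also note I
  finally have "(\<Sum>j<n. real (Suc j) * a (Suc j)) \<le> t/(1-t) / t^n"
    using t by (simp add: field_simps)
  also have "t/(1-t) / t^n = real n ^ n / (real n - 1) ^ (n - 1)"
  proof -
    have n1: "real n - 1 > 0" using n by simp
    have e: "(real n - 1)^n = (real n - 1) * (real n - 1)^(n-1)"
      using n by (metis Suc_diff_1 power_Suc less_le_trans pos2)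
    have A: "t/(1-t) = real n - 1" using n by (simp add: t_def field_simps)
    have B: "t^n = (real n - 1)^n / real n ^ n" by (simp add: t_def power_divide)
    have "t/(1-t)/t^n = (real n - 1) / ((real n - 1)^n / real n^n)" by (simp only: A B)
    also have "\<dots> = real n ^ n * (real n - 1) / (real n - 1)^n" using n1 n by (simp add: field_simps)
    also have "\<dots> = real n ^ n / (real n - 1)^(n-1)" unfolding e using n1 by simp
    finally show ?thesis .
  qed
  finally show ?thesis by (simp add: sum.atLeast1_atMost_eq a_def)
qed

lemma bern: "0 \<le> (x::real) \<Longrightarrow> 1 + real k * x \<le> (1 + x)^k"
proof (induction k)
  case 0 then show ?case by simp
next
  case (Suc k)
  have "1 + real (Suc k) * x \<le> (1 + real k * x) * (1 + x)"
    using Suc.prems by (simp add: algebra_simps)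
  also have "\<dots> \<le> (1 + x)^k * (1 + x)"
    using Suc by (intro mult_right_mono) auto
  finally show ?case by (simp add: mult.commute)
qed

lemma gmono:
  assumes "n \<ge> 1"
  shows "(real n/(real n+1))^(n+1) \<le> (real (Suc n)/(real (Suc n)+1))^(Suc n+1)"
proof -
  define N where "N = real n"
  have N: "N \<ge> 1" using assms by (simp add: N_def)
  define x where "x = 1 / (N * (N + 2))"
  have x0: "x \<ge> 0" using N by (simp add: x_def)
  have l: "1/(N+1) \<le> (N+1)/(N*(N+2))"
    using N by (simp add: divide_simps) (simp add: algebra_simps)
  have "(N+2)/(N+1) = 1 + 1/(N+1)" using N by (simp add: field_simps)
  also have "\<dots> \<le> 1 + real (n+1) * x" using l by (simp add: x_def N_def add.commute)
  finally have "(N+2)/(N+1) \<le> 1 + real (n+1) * x" .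
  also have "\<dots> \<le> (1 + x)^(n+1)" by (rule bern[OF x0])
  finally have b: "(N+2)/(N+1) \<le> (1 + x)^(n+1)" .
  have q: "N/(N+1) * (1 + x) = (N+1)/(N+2)"
  proof -
    have a: "N \<noteq> 0" "N + 1 \<noteq> 0" "N + 2 \<noteq> 0" using N by auto
    have b: "N*(N+2) \<noteq> 0" using a by simp
    have "1 + x = (N*(N+2) + 1) / (N*(N+2))" unfolding x_def using b
      by (simp add: add_divide_distrib)
    also have "N*(N+2) + 1 = (N+1)^2" by (simp add: algebra_simps power2_eq_square)
    finally have "1 + x = (N+1)^2 / (N*(N+2))" .
    then show ?thesis using a by (simp add: power2_eq_square)
  qed
  have "(real (Suc n)/(real (Suc n)+1))^(Suc n+1) = ((N+1)/(N+2))^(n+1) * ((N+1)/(N+2))"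
    by (simp add: N_def add_ac)
  also have "((N+1)/(N+2))^(n+1) = (N/(N+1))^(n+1) * (1 + x)^(n+1)"
    by (simp only: q[symmetric] power_mult_distrib)
  finally have e: "(real (Suc n)/(real (Suc n)+1))^(Suc n+1) = (N/(N+1))^(n+1) * ((1 + x)^(n+1) * ((N+1)/(N+2)))"
    by (simp add: mult_ac)
  have "1 \<le> (1 + x)^(n+1) * ((N+1)/(N+2))"
  proof -
    have "N+2 \<noteq> 0" "N+1 \<noteq> 0" using N by auto
    then have "1 = (N+2)/(N+1) * ((N+1)/(N+2))" by simp
    also have "\<dots> \<le> (1 + x)^(n+1) * ((N+1)/(N+2))"
      using b N by (intro mult_right_mono) auto
    finally show ?thesis .
  qed
  then have "(N/(N+1))^(n+1) * 1 \<le> (N/(N+1))^(n+1) * ((1 + x)^(n+1) * ((N+1)/(N+2)))"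
    using N by (intro mult_left_mono) auto
  then show ?thesis unfolding e by (simp add: N_def)
qed

lemma glow:
  assumes "n \<ge> 2"
  shows "8/27 \<le> (real n/(real n+1))^(n+1)"
  using assms
proof (induction n rule: dec_induct)
  case base then show ?case by (simp add: power_divide)
next
  case (step m)
  show ?case by (rule order_trans[OF step.IH gmono]) (use step.hyps in simp)
qed

lemma gup: "(real n/(real n+1))^(n+1) \<le> exp (-1)"
proof -
  have "real n/(real n+1) = 1 + (- 1/(real n+1))" by (simp add: field_simps)
  also have "\<dots> \<le> exp (- 1/(real n+1))" by (rule exp_ge_add_one_self)
  finally have "(real n/(real n+1))^(n+1) \<le> exp (- 1/(real n+1))^(n+1)"
    by (intro power_mono) auto
  also have "\<dots> = exp (real (n+1) * (- 1/(real n+1)))" by (simp only: exp_of_nat_mult)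
  also have "real (n+1) * (- 1/(real n+1)) = -1" by (simp add: field_simps)
  finally show ?thesis .
qed

lemma ident:
  assumes "n \<ge> 2"
  shows "real n ^ n / (real n - 1) ^ (n - 1) = 4 * (real n/(real n+1))^(n+1) * (real n * (B_const n)^2)"
proof -
  define k where "k = n - 1"
  have nk: "n = Suc k" using assms by (simp add: k_def)
  have n1: "real n - 1 > 0" using assms by simp
  have "(B_const n)^2 = ((real n + 1) / (2 * real n))^2 * (((real n + 1) / (real n - 1)) powr ((real n - 1) / 2))^2"
    by (simp only: B_const_def power_mult_distrib)
  also have "(((real n + 1) / (real n - 1)) powr ((real n - 1) / 2))^2 = ((real n + 1) / (real n - 1)) powr (real k)"
    using n1 by (simp add: power2_eq_square powr_add[symmetric] nk)
  also have "\<dots> = ((real n + 1) / (real n - 1)) ^ k"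
    using n1 by (intro powr_realpow) simp
  finally have B: "(B_const n)^2 = ((real n + 1) / (2 * real n))^2 * ((real n + 1) / (real n - 1)) ^ k" .
  have k0: "real k > 0" using assms by (simp add: k_def)
  have rn: "real n = real k + 1" by (simp add: nk)
  have "real n ^ n / (real n - 1) ^ (n - 1) = (real k + 1) * (real k + 1)^k / real k ^ k"
    by (simp add: nk add.commute)
  also have "\<dots> = 4 * ((real k + 1)^2 * (real k + 1)^k / ((real k + 2)^2 * (real k + 2)^k)) * ((real k + 1) * ((real k + 2) / (2 * (real k + 1)))^2 * ((real k + 2)^k / real k ^ k))"
  proof -
    have gen: "p * a / d = 4 * (p^2 * a / (q^2 * c)) * (p * (q / (2 * p))^2 * (c / d))"
      if "p > 0" "q > 0" "c > 0" "d > 0" for p q a c d :: real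
      using that by (simp add: field_simps power2_eq_square)
    show ?thesis using k0 by (intro gen) auto
  qed
  also have "\<dots> = 4 * (real n/(real n+1))^(n+1) * (real n * (B_const n)^2)"
    unfolding B rn by (simp add: nk power_divide power2_eq_square add_ac mult_ac)
  finally show ?thesis .
qed

lemma part2:
  assumes "n \<ge> 2"
  shows "32 / 27 * real n * (B_const n)^2 \<le> real n ^ n / (real n - 1) ^ (n - 1)
             \<and> real n ^ n / (real n - 1) ^ (n - 1) \<le> 4 / exp 1 * real n * (B_const n)^2"
proof -
  have P: "real n * (B_const n)^2 \<ge> 0" by simp
  have "32 / 27 * real n * (B_const n)^2 = 4 * (8/27) * (real n * (B_const n)^2)" by simp
  also have "\<dots> \<le> 4 * (real n/(real n+1))^(n+1) * (real n * (B_const n)^2)"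
    using glow[OF assms] P by (intro mult_right_mono) auto
  finally have 1: "32 / 27 * real n * (B_const n)^2 \<le> real n ^ n / (real n - 1) ^ (n - 1)"
    unfolding ident[OF assms] .
  have "4 * (real n/(real n+1))^(n+1) * (real n * (B_const n)^2) \<le> 4 * exp (-1) * (real n * (B_const n)^2)"
    using gup[of n] P by (intro mult_right_mono) auto
  also have "\<dots> = 4 / exp 1 * real n * (B_const n)^2" by (simp add: exp_minus field_simps)
  finally have 2: "real n ^ n / (real n - 1) ^ (n - 1) \<le> 4 / exp 1 * real n * (B_const n)^2"
    unfolding ident[OF assms] .
  from 1 2 show ?thesis by blast
qed

theorem proposition4p1:
  fixes f :: "complex \<Rightarrow> complex" and b :: "nat \<Rightarrow> complex"
  assumes "f holomorphic_on ball 0 1"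
    and "\<And>z. z \<in> ball 0 1 \<Longrightarrow> (\<lambda>k. b k * z ^ k) sums f z"
    and "b 0 = 0"
    and "f \<in> bloch_space" and "bloch_norm f \<le> 1"
  shows "(\<forall>n\<ge>2. (\<Sum>k=1..n. real k * (cmod (b k))^2) \<le> real n ^ n / (real n - 1) ^ (n - 1))
    \<and> (\<forall>n\<ge>2. 32 / 27 * real n * (B_const n)^2 \<le> real n ^ n / (real n - 1) ^ (n - 1)
             \<and> real n ^ n / (real n - 1) ^ (n - 1) \<le> 4 / exp 1 * real n * (B_const n)^2)"
proof -
  have "(\<lambda>k. b k * 0 ^ k) sums f 0" using assms(2)[of 0] by simp
  then have f0: "f 0 = 0" using powser_sums_zero[of b] assms(3) by (metis sums_unique2)
  have bl: "(1 - (cmod z)^2) * cmod (deriv f z) \<le> 1" if z: "z \<in> ball 0 1" for z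
  proof -
    have bdd: "bdd_above ((\<lambda>z. (1 - (cmod z)^2) * cmod (deriv f z)) ` ball 0 1)"
      using assms(4) by (simp add: bloch_space_def)
    have "(1 - (cmod z)^2) * cmod (deriv f z) \<le> (SUP z\<in>ball 0 1. (1 - (cmod z)^2) * cmod (deriv f z))"
      by (rule cSUP_upper[OF z bdd])
    also have "\<dots> = bloch_norm f" by (simp add: bloch_norm_def f0)
    finally show ?thesis using assms(5) by simp
  qed
  show ?thesis using part1[OF assms(2) bl] part2 by blast
qed

end
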